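(* Let $D$ be a finite set of games between models $m_0,\dots,m_{k-1}$ such that there exists one model that has played every other model at least once in $D$. For a rating vector $\mathbf{R}=(R^{m_0},\dots,R^{m_{k-1}})\in\mathbb{R}^k$ define the logistic loss $$\mathcal{L}(D,\mathbf{R})=\sum_{g\in D}\Big[-g_r\log \operatorname{sig}\Big(\tfrac{R^{g_{m_a}}-R^{g_{m_b}}}{400}\Big)-(1-g_r)\log\Big(1-\operatorname{sig}\Big(\tfrac{R^{g_{m_a}}-R^{g_{m_b}}}{400}\Big)\Big)\Big],$$ with $\operatorname{sig}(x)=1/(1+e^{-x})$. If $\mathbf{R}_1$ and $\mathbf{R}_2$ both minimize $\mathbf{R}\mapsto\mathcal{L}(D,\mathbf{R})$ over $\mathbb{R}^k$, then $\mathbf{R}_1-\mathbf{R}_2$ is a constant vector (all its entries are equal).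
   Context: Each game $g\in D$ consists of two distinct models $g_{m_a},g_{m_b}$ among $m_0,\dots,m_{k-1}$ and a result $g_r\in\{0,\tfrac12,1\}$ ($1$ if $g_{m_a}$ wins, $0$ if it loses, $\tfrac12$ for a draw). *)

theory Defs
  imports Complex_Main
begin

definition sig :: "real \<Rightarrow> real" where
  "sig x = 1 / (1 + exp (- x))"

text \<open>Games are elements of an arbitrary index set D (so repeated games are allowed);
  ma g, mb g are the indices of the two models, res g the result.
  Ratings are functions nat => real, of which only entries 0..k-1 matter.\<close>
definition elo_loss ::
  "'g set \<Rightarrow> ('g \<Rightarrow> nat) \<Rightarrow> ('g \<Rightarrow> nat) \<Rightarrow> ('g \<Rightarrow> real) \<Rightarrow> (nat \<Rightarrow> real) \<Rightarrow> real" where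
  "elo_loss D ma mb res R =
     (\<Sum>g\<in>D. - res g * ln (sig ((R (ma g) - R (mb g)) / 400))
             - (1 - res g) * ln (1 - sig ((R (ma g) - R (mb g)) / 400)))"

end

theory Submission
  imports Defs
begin

definition psi :: "real \<Rightarrow> real" where "psi x = ln (1 + exp x)"

definition T :: "real \<Rightarrow> real \<Rightarrow> real" where
  "T r x = r * psi (- x) + (1 - r) * psi x"

lemma term_eq: "- r * ln (sig x) - (1 - r) * ln (1 - sig x) = T r x"
proof -
  have p: "0 < 1 + exp (-x)" "0 < 1 + exp x" by (auto simp: add_pos_pos)
  have "ln (sig x) = - psi (-x)" unfolding sig_def psi_def using p by (simp add: ln_div)
  moreover have "1 - sig x = 1 / (1 + exp x)"
    unfolding sig_def using p by (simp add: field_simps exp_minus)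
  hence "ln (1 - sig x) = - psi x" unfolding psi_def using p by (simp add: ln_div)
  ultimately show ?thesis unfolding T_def by simp
qed

lemma psi_mid:
  shows "psi ((x + y) / 2) \<le> (psi x + psi y) / 2"
    and "x \<noteq> y \<Longrightarrow> psi ((x + y) / 2) < (psi x + psi y) / 2"
proof -
  define a where "a = exp (x/2)"
  define b where "b = exp (y/2)"
  have a2: "exp x = a^2" unfolding a_def by (simp add: power2_eq_square flip: exp_add)
  have b2: "exp y = b^2" unfolding b_def by (simp add: power2_eq_square flip: exp_add)
  have ab: "exp ((x+y)/2) = a * b" unfolding a_def b_def by (simp add: add_divide_distrib flip: exp_add)
  have pa: "a > 0" "b > 0" unfolding a_def b_def by auto
  have "0 < 1 + a*b" using pa by (simp add: add_pos_pos)
  have L: "2 * psi ((x + y) / 2) = ln ((1 + a*b)^2)"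
    unfolding psi_def ab using ln_realpow[of "1 + a*b" 2] by simp
  have R: "psi x + psi y = ln ((1 + a^2) * (1 + b^2))"
    proof -
    have "0 < 1 + a^2" "0 < 1 + b^2" by (simp_all add: add_pos_nonneg)
    thus ?thesis unfolding psi_def a2 b2 by (simp add: ln_mult)
  qed
  have eq: "(1 + a^2) * (1 + b^2) - (1 + a*b)^2 = (a - b)^2" by (simp add: power2_eq_square algebra_simps)
  have pos: "0 < (1 + a*b)^2" using \<open>0 < 1 + a*b\<close> by simp
  have "(1 + a*b)^2 \<le> (1 + a^2) * (1 + b^2)" using eq by (smt (verit) zero_le_power2)
  hence "ln ((1 + a*b)^2) \<le> ln ((1 + a^2) * (1 + b^2))" using pos by (meson ln_le_cancel_iff less_le_trans)
  thus "psi ((x + y) / 2) \<le> (psi x + psi y) / 2" using L R by simp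
  assume "x \<noteq> y"
  hence "a \<noteq> b" unfolding a_def b_def by simp
  hence "(a - b)^2 > 0" by simp
  hence "(1 + a*b)^2 < (1 + a^2) * (1 + b^2)" using eq by linarith
  hence "ln ((1 + a*b)^2) < ln ((1 + a^2) * (1 + b^2))" using pos by (meson ln_less_cancel_iff less_trans)
  thus "psi ((x + y) / 2) < (psi x + psi y) / 2" using L R by simp
qed

lemma T_mid:
  fixes x y :: real
  assumes "0 \<le> r" "r \<le> 1"
  shows "T r ((x + y) / 2) \<le> (T r x + T r y) / 2"
    and "x \<noteq> y \<Longrightarrow> T r ((x + y) / 2) < (T r x + T r y) / 2"
proof -
  have m: "- ((x + y) / 2) = ((-x) + (-y)) / 2" by (simp add: field_simps)
  have A: "psi (- ((x + y) / 2)) \<le> (psi (-x) + psi (-y)) / 2" unfolding m by (rule psi_mid(1))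
  have B: "psi ((x + y) / 2) \<le> (psi x + psi y) / 2" by (rule psi_mid(1))
  have A': "r * psi (- ((x + y) / 2)) \<le> r * ((psi (-x) + psi (-y)) / 2)"
    using mult_left_mono[OF A, of r] assms by simp
  have B': "(1 - r) * psi ((x + y) / 2) \<le> (1 - r) * ((psi x + psi y) / 2)"
    using mult_left_mono[OF B, of "1 - r"] assms by simp
  show "T r ((x + y) / 2) \<le> (T r x + T r y) / 2"
    using A' B' unfolding T_def by (simp add: algebra_simps)
  assume ne: "x \<noteq> y"
  show "T r ((x + y) / 2) < (T r x + T r y) / 2"
  proof (cases "r > 0")
    case True
    have "psi (- ((x + y) / 2)) < (psi (-x) + psi (-y)) / 2" unfolding m
      by (rule psi_mid(2)) (use ne in simp)
    hence "r * psi (- ((x + y) / 2)) < r * ((psi (-x) + psi (-y)) / 2)"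
      using True by simp
    thus ?thesis using B' unfolding T_def by (simp add: algebra_simps)
  next
    case False
    hence "1 - r > 0" using assms by simp
    moreover have "psi ((x + y) / 2) < (psi x + psi y) / 2" by (rule psi_mid(2)[OF ne])
    ultimately have "(1 - r) * psi ((x + y) / 2) < (1 - r) * ((psi x + psi y) / 2)" by simp
    thus ?thesis using A' unfolding T_def by (simp add: algebra_simps)
  qed
qed

lemma loss_eq: "elo_loss D ma mb res R = (\<Sum>g\<in>D. T (res g) ((R (ma g) - R (mb g)) / 400))"
  unfolding elo_loss_def using term_eq by (simp add: mult_minus_left)

theorem mainTheorem2:
  fixes D :: "'g set" and ma mb :: "'g \<Rightarrow> nat" and res :: "'g \<Rightarrow> real"
    and k :: nat and R1 R2 :: "nat \<Rightarrow> real"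
  assumes "finite D"
    and "\<forall>g\<in>D. ma g < k \<and> mb g < k \<and> ma g \<noteq> mb g"
    and "\<forall>g\<in>D. res g \<in> {0, 1/2, 1}"
    and "\<exists>i<k. \<forall>j<k. j \<noteq> i \<longrightarrow>
           (\<exists>g\<in>D. (ma g = i \<and> mb g = j) \<or> (ma g = j \<and> mb g = i))"
    and "\<forall>R. elo_loss D ma mb res R1 \<le> elo_loss D ma mb res R"
    and "\<forall>R. elo_loss D ma mb res R2 \<le> elo_loss D ma mb res R"
  shows "\<exists>c. \<forall>i<k. R1 i - R2 i = c"
proof -
  define M where "M = (\<lambda>n. (R1 n + R2 n) / 2)"
  define x where "x = (\<lambda>(R::nat\<Rightarrow>real) g. (R (ma g) - R (mb g)) / 400)"
  have xM: "x M g = (x R1 g + x R2 g) / 2" for g unfolding x_def M_def by (simp add: field_simps)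
  have r01: "0 \<le> res g \<and> res g \<le> 1" if "g \<in> D" for g using assms(3) that by auto
  have L: "elo_loss D ma mb res R = (\<Sum>g\<in>D. T (res g) (x R g))" for R
    unfolding loss_eq x_def ..
  have eqL: "elo_loss D ma mb res R1 = elo_loss D ma mb res R2" using assms(5,6) by (meson order_antisym)
  have same: "x R1 g = x R2 g" if g: "g \<in> D" for g
  proof (rule ccontr)
    assume ne: "x R1 g \<noteq> x R2 g"
    have "(\<Sum>g\<in>D. T (res g) (x M g)) < (\<Sum>g\<in>D. (T (res g) (x R1 g) + T (res g) (x R2 g)) / 2)"
    proof (rule sum_strict_mono_ex1[OF assms(1)])
      show "\<forall>h\<in>D. T (res h) (x M h) \<le> (T (res h) (x R1 h) + T (res h) (x R2 h)) / 2"
        using T_mid(1) r01 xM by metis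
      show "\<exists>h\<in>D. T (res h) (x M h) < (T (res h) (x R1 h) + T (res h) (x R2 h)) / 2"
        using T_mid(2)[OF _ _ ne] r01[OF g] xM g by metis
    qed
    also have "\<dots> = (elo_loss D ma mb res R1 + elo_loss D ma mb res R2) / 2"
      unfolding L by (simp add: sum.distrib flip: sum_divide_distrib)
    finally have "elo_loss D ma mb res M < elo_loss D ma mb res R1" using eqL L by simp
    thus False using assms(5) by (meson not_le)
  qed
  define d where "d = (\<lambda>n. R1 n - R2 n)"
  have dd: "d (ma g) = d (mb g)" if "g \<in> D" for g
    using same[OF that] unfolding x_def d_def by (simp add: field_simps)
  obtain i where i: "i < k" "\<forall>j<k. j \<noteq> i \<longrightarrow>
           (\<exists>g\<in>D. (ma g = i \<and> mb g = j) \<or> (ma g = j \<and> mb g = i))" using assms(4) by blast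
  have "\<forall>j<k. d j = d i"
  proof (intro allI impI)
    fix j assume "j < k"
    show "d j = d i"
    proof (cases "j = i")
      case False
      then obtain g where "g \<in> D" "(ma g = i \<and> mb g = j) \<or> (ma g = j \<and> mb g = i)"
        using i \<open>j < k\<close> by blast
      thus ?thesis using dd by metis
    qed simp
  qed
  thus ?thesis unfolding d_def by blast
qed

end
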